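(* Let $\varphi$ be a sentence of $\mathrm{FO}^2[<,\mathcal{EQ}^{\subseteq}]$ in Scott Normal Form $\forall x,y.\,\psi_0(x,y) \wedge \bigwedge_{m=1}^{M} \forall x.\,\exists y.\,\psi_m(x,y)$, using exactly the equivalence symbols $E_1,\dots,E_K$, and let $\boldsymbol{\alpha}$ be the set of all 1-types over the signature of $\varphi$. Let $\mathfrak{A}$ be a finite model of $\varphi$, fix $k \in \{0,1,\dots,K\}$, and let $\mathcal{C}$ be an equivalence class of $E_{k+1}^{\mathfrak{A}}$. Then there exists a subset $\mathcal{D} \subseteq \mathcal{C}$ such that (1) $\mathcal{D}$ is the union of at most $12 \cdot M^3 \cdot |\boldsymbol{\alpha}|$ equivalence classes of $E_k^{\mathfrak{A}}$ contained in $\mathcal{C}$; and (2) $\varphi$ has a model $\mathfrak{B}$ (in the sense of $\mathrm{FO}^2[<,\mathcal{EQ}^{\subseteq}]$) with domain $B = (A \setminus \mathcal{C}) \cup \mathcal{D}$.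
   Context: $\mathrm{FO}^2[<,\mathcal{EQ}^{\subseteq}]$ is two-variable first-order logic (variables $x,y$ only; unary and binary relation symbols, equality, constants, no function symbols) extended with a special symbol $<$ interpreted as a strict linear order and special symbols $E_1, E_2, \dots$ interpreted as equivalence relations with $E_k \subseteq E_{k+1}$. A sentence is in Scott Normal Form if it has the displayed shape where each $\psi_m$ ($0 \le m \le M$) is quantifier-free, constant-free, and uses only relation symbols of arity 1 and 2. Additionally $E_0$ is interpreted as the identity relation and $E_{K+1}$ as the universal relation. A 1-type over a signature is a maximal consistent set of literals over that signature involving only the variable $x$. *)

theory Defs
  imports Main
begin

datatype var = X | Y

datatype atom =
    AEq var var
  | ALess var var
  | AE nat var var
  | AU nat var
  | AR nat var var

datatype fm =
    FTrue
  | Atom atom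
  | Neg fm
  | Conj fm fm
  | Disj fm fm
  | Ex var fm
  | All var fm

fun qfree :: "fm \<Rightarrow> bool" where
  "qfree FTrue = True"
| "qfree (Atom a) = True"
| "qfree (Neg f) = qfree f"
| "qfree (Conj f g) = (qfree f \<and> qfree g)"
| "qfree (Disj f g) = (qfree f \<and> qfree g)"
| "qfree (Ex v f) = False"
| "qfree (All v f) = False"

definition snf :: "fm \<Rightarrow> fm list \<Rightarrow> fm" where
  "snf psi0 psis =
     Conj (All X (All Y psi0)) (foldr (\<lambda>psi acc. Conj (All X (Ex Y psi)) acc) psis FTrue)"

fun atom_eqs :: "atom \<Rightarrow> nat set" where
  "atom_eqs (AE i u w) = {i}"
| "atom_eqs _ = {}"

fun atom_uns :: "atom \<Rightarrow> nat set" where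
  "atom_uns (AU i u) = {i}"
| "atom_uns _ = {}"

fun atom_bins :: "atom \<Rightarrow> nat set" where
  "atom_bins (AR i u w) = {i}"
| "atom_bins _ = {}"

fun fm_atoms :: "fm \<Rightarrow> atom set" where
  "fm_atoms FTrue = {}"
| "fm_atoms (Atom a) = {a}"
| "fm_atoms (Neg f) = fm_atoms f"
| "fm_atoms (Conj f g) = fm_atoms f \<union> fm_atoms g"
| "fm_atoms (Disj f g) = fm_atoms f \<union> fm_atoms g"
| "fm_atoms (Ex v f) = fm_atoms f"
| "fm_atoms (All v f) = fm_atoms f"

definition fm_eqs :: "fm \<Rightarrow> nat set" where
  "fm_eqs f = (\<Union>a\<in>fm_atoms f. atom_eqs a)"

definition fm_uns :: "fm \<Rightarrow> nat set" where
  "fm_uns f = (\<Union>a\<in>fm_atoms f. atom_uns a)"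

definition fm_bins :: "fm \<Rightarrow> nat set" where
  "fm_bins f = (\<Union>a\<in>fm_atoms f. atom_bins a)"

record 'a struct =
  sdom :: "'a set"
  slt :: "'a \<Rightarrow> 'a \<Rightarrow> bool"
  seq :: "nat \<Rightarrow> 'a \<Rightarrow> 'a \<Rightarrow> bool"
  sun :: "nat \<Rightarrow> 'a \<Rightarrow> bool"
  sbin :: "nat \<Rightarrow> 'a \<Rightarrow> 'a \<Rightarrow> bool"

definition equiv_on :: "'a set \<Rightarrow> ('a \<Rightarrow> 'a \<Rightarrow> bool) \<Rightarrow> bool" where
  "equiv_on D R \<longleftrightarrow> (\<forall>a\<in>D. R a a) \<and> (\<forall>a\<in>D. \<forall>b\<in>D. R a b \<longrightarrow> R b a)
     \<and> (\<forall>a\<in>D. \<forall>b\<in>D. \<forall>c\<in>D. R a b \<longrightarrow> R b c \<longrightarrow> R a c)"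

definition wf_struct :: "'a struct \<Rightarrow> bool" where
  "wf_struct S \<longleftrightarrow> sdom S \<noteq> {}
     \<and> (\<forall>a\<in>sdom S. \<not> slt S a a)
     \<and> (\<forall>a\<in>sdom S. \<forall>b\<in>sdom S. \<forall>c\<in>sdom S. slt S a b \<longrightarrow> slt S b c \<longrightarrow> slt S a c)
     \<and> (\<forall>a\<in>sdom S. \<forall>b\<in>sdom S. a \<noteq> b \<longrightarrow> slt S a b \<or> slt S b a)
     \<and> (\<forall>i\<ge>1. equiv_on (sdom S) (seq S i))
     \<and> (\<forall>i\<ge>1. \<forall>a\<in>sdom S. \<forall>b\<in>sdom S. seq S i a b \<longrightarrow> seq S (Suc i) a b)"

fun sat_atom :: "'a struct \<Rightarrow> (var \<Rightarrow> 'a) \<Rightarrow> atom \<Rightarrow> bool" where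
  "sat_atom S v (AEq u w) = (v u = v w)"
| "sat_atom S v (ALess u w) = slt S (v u) (v w)"
| "sat_atom S v (AE i u w) = seq S i (v u) (v w)"
| "sat_atom S v (AU i u) = sun S i (v u)"
| "sat_atom S v (AR i u w) = sbin S i (v u) (v w)"

fun sat :: "'a struct \<Rightarrow> (var \<Rightarrow> 'a) \<Rightarrow> fm \<Rightarrow> bool" where
  "sat S v FTrue = True"
| "sat S v (Atom a) = sat_atom S v a"
| "sat S v (Neg f) = (\<not> sat S v f)"
| "sat S v (Conj f g) = (sat S v f \<and> sat S v g)"
| "sat S v (Disj f g) = (sat S v f \<or> sat S v g)"
| "sat S v (Ex u f) = (\<exists>a\<in>sdom S. sat S (v(u := a)) f)"
| "sat S v (All u f) = (\<forall>a\<in>sdom S. sat S (v(u := a)) f)"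

definition models :: "'a struct \<Rightarrow> fm \<Rightarrow> bool" where
  "models S f \<longleftrightarrow> (\<forall>v. range v \<subseteq> sdom S \<longrightarrow> sat S v f)"

definition x_atoms :: "fm \<Rightarrow> atom set" where
  "x_atoms f = {AEq X X, ALess X X} \<union> {AE i X X | i. i \<in> fm_eqs f}
      \<union> {AU i X | i. i \<in> fm_uns f} \<union> {AR i X X | i. i \<in> fm_bins f}"

type_synonym literal = "bool \<times> atom"

definition x_literals :: "fm \<Rightarrow> literal set" where
  "x_literals f = {(b, a) | b a. a \<in> x_atoms f}"

fun lit_sat :: "'a struct \<Rightarrow> (var \<Rightarrow> 'a) \<Rightarrow> literal \<Rightarrow> bool" where
  "lit_sat S v (b, a) = (sat_atom S v a = b)"

definition consistent_lits :: "literal set \<Rightarrow> bool" where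
  "consistent_lits L \<longleftrightarrow> (\<exists>(S :: nat struct) a. wf_struct S \<and> a \<in> sdom S
      \<and> (\<forall>l\<in>L. lit_sat S (\<lambda>_. a) l))"

definition one_types :: "fm \<Rightarrow> literal set set" where
  "one_types f = {L. L \<subseteq> x_literals f \<and> consistent_lits L
      \<and> (\<forall>L'. L \<subset> L' \<and> L' \<subseteq> x_literals f \<longrightarrow> \<not> consistent_lits L')}"

definition Erel :: "'a struct \<Rightarrow> nat \<Rightarrow> nat \<Rightarrow> 'a \<Rightarrow> 'a \<Rightarrow> bool" where
  "Erel S K k a b = (if k = 0 then a = b else if k = K + 1 then True else seq S k a b)"

definition classes :: "'a struct \<Rightarrow> nat \<Rightarrow> nat \<Rightarrow> 'a set set" where
  "classes S K k = {{b \<in> sdom S. Erel S K k a b} | a. a \<in> sdom S}"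

end

theory Submission
  imports Defs
begin
lemma wfD:
  assumes "wf_struct S"
  shows "sdom S \<noteq> {}" "\<And>a. a \<in> sdom S \<Longrightarrow> \<not> slt S a a"
   "\<And>a b c. a\<in>sdom S \<Longrightarrow> b\<in>sdom S \<Longrightarrow> c \<in> sdom S \<Longrightarrow> slt S a b \<Longrightarrow> slt S b c \<Longrightarrow> slt S a c"
   "\<And>a b. a\<in>sdom S \<Longrightarrow> b\<in>sdom S \<Longrightarrow> a\<noteq>b \<Longrightarrow> slt S a b \<or> slt S b a"
   "\<And>i. i \<ge> 1 \<Longrightarrow> equiv_on (sdom S) (seq S i)"
   "\<And>i a b. i\<ge>1 \<Longrightarrow> a\<in>sdom S \<Longrightarrow> b\<in>sdom S \<Longrightarrow> seq S i a b \<Longrightarrow> seq S (Suc i) a b"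
  using assms unfolding wf_struct_def by blast+

lemma seq_refl: "wf_struct S \<Longrightarrow> 1 \<le> i \<Longrightarrow> a \<in> sdom S \<Longrightarrow> seq S i a a"
  using wfD(5) unfolding equiv_on_def by blast
lemma seq_sym: "wf_struct S \<Longrightarrow> 1 \<le> i \<Longrightarrow> a \<in> sdom S \<Longrightarrow> b \<in> sdom S \<Longrightarrow> seq S i a b \<Longrightarrow> seq S i b a"
  using wfD(5) unfolding equiv_on_def by blast
lemma seq_trans: "wf_struct S \<Longrightarrow> 1 \<le> i \<Longrightarrow> a \<in> sdom S \<Longrightarrow> b \<in> sdom S \<Longrightarrow> c \<in> sdom S \<Longrightarrow> seq S i a b \<Longrightarrow> seq S i b c \<Longrightarrow> seq S i a c"
  using wfD(5) unfolding equiv_on_def by blast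

lemma seq_mono:
  assumes "wf_struct S" "1 \<le> i" "i \<le> j" "a \<in> sdom S" "b \<in> sdom S" "seq S i a b"
  shows "seq S j a b"
  using assms(3)
proof (induction j rule: dec_induct)
  case base then show ?case using assms by simp
next
  case (step n) then show ?case using assms wfD(6)[of S n a b] by simp
qed

lemma Erel_refl: "wf_struct S \<Longrightarrow> a \<in> sdom S \<Longrightarrow> Erel S K j a a"
  unfolding Erel_def using seq_refl by fastforce
lemma Erel_sym: "wf_struct S \<Longrightarrow> a \<in> sdom S \<Longrightarrow> b \<in> sdom S \<Longrightarrow> Erel S K j a b \<Longrightarrow> Erel S K j b a"
  unfolding Erel_def using seq_sym[of S j a b] by (cases "j = 0") auto
lemma Erel_trans: "wf_struct S \<Longrightarrow> a \<in> sdom S \<Longrightarrow> b \<in> sdom S \<Longrightarrow> c \<in> sdom S \<Longrightarrow> Erel S K j a b \<Longrightarrow> Erel S K j b c \<Longrightarrow> Erel S K j a c"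
  unfolding Erel_def using seq_trans[of S j a b c] by (cases "j = 0") auto
lemma Erel_mono: "wf_struct S \<Longrightarrow> j \<le> K \<Longrightarrow> a \<in> sdom S \<Longrightarrow> b \<in> sdom S \<Longrightarrow> Erel S K j a b \<Longrightarrow> Erel S K (Suc j) a b"
  unfolding Erel_def using seq_refl[of S "Suc 0" b] wfD(6)[of S j a b] by (cases "j = 0") auto

definition vv :: "'b \<Rightarrow> 'b \<Rightarrow> var \<Rightarrow> 'b" where "vv a b = (\<lambda>u. case u of X \<Rightarrow> a | Y \<Rightarrow> b)"

lemma upd_vv: "(v(X := a))(Y := b) = vv a b" by (auto simp: vv_def fun_eq_iff split: var.splits)

lemma sat_foldr: "sat S v (foldr (\<lambda>psi acc. Conj (All X (Ex Y psi)) acc) psis FTrue) \<longleftrightarrow> (\<forall>psi\<in>set psis. sat S v (All X (Ex Y psi)))"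
  by (induction psis) auto

lemma models_snf_iff:
  assumes "sdom S \<noteq> {}"
  shows "models S (snf psi0 psis) \<longleftrightarrow> (\<forall>a\<in>sdom S. \<forall>b\<in>sdom S. sat S (vv a b) psi0) \<and> (\<forall>psi\<in>set psis. \<forall>a\<in>sdom S. \<exists>b\<in>sdom S. sat S (vv a b) psi)"
proof -
  obtain a0 where a0: "a0 \<in> sdom S" using assms by blast
  have r: "range (\<lambda>_. a0) \<subseteq> sdom S" using a0 by auto
  show ?thesis
    unfolding models_def snf_def
    apply (simp add: sat_foldr upd_vv)
    using r by blast
qed

lemma sat_transfer:
  assumes "qfree f"
  and "\<And>at. at \<in> fm_atoms f \<Longrightarrow> sat_atom S1 v1 at = sat_atom S2 v2 at"
  shows "sat S1 v1 f = sat S2 v2 f"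
  using assms by (induction f) auto

lemma fm_atoms_snf: "fm_atoms (snf psi0 psis) = fm_atoms psi0 \<union> (\<Union>psi\<in>set psis. fm_atoms psi)"
  unfolding snf_def by (induction psis) auto

lemma finite_fm_atoms: "finite (fm_atoms f)" by (induction f) auto

definition elig :: "'a set \<Rightarrow> ('a \<Rightarrow> 'a \<Rightarrow> bool) \<Rightarrow> 'a set \<Rightarrow> 'a set" where
 "elig E R Z = {c \<in> E. \<forall>z\<in>Z. \<not> R z c}"
definition pick :: "('a \<Rightarrow> nat) \<Rightarrow> 'a set \<Rightarrow> 'a" where
 "pick key G = (SOME c. c \<in> G \<and> (\<forall>c'\<in>G. key c' \<le> key c))"
fun zs :: "('a \<Rightarrow> nat) \<Rightarrow> ('a \<Rightarrow> 'a \<Rightarrow> bool) \<Rightarrow> 'a set \<Rightarrow> nat \<Rightarrow> 'a list" where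
  "zs key R E 0 = []"
| "zs key R E (Suc j) = (if elig E R (set (zs key R E j)) = {} then zs key R E j
     else zs key R E j @ [pick key (elig E R (set (zs key R E j)))])"

lemma pick_prop:
  assumes "finite G" "G \<noteq> {}"
  shows "pick key G \<in> G \<and> (\<forall>c'\<in>G. key c' \<le> key (pick key G))"
proof -
  have "Max (key ` G) \<in> key ` G" using assms by simp
  then obtain c where c: "c \<in> G" "key c = Max (key ` G)" by auto
  have "\<forall>c'\<in>G. key c' \<le> key c" using c assms by simp
  then have "\<exists>c. c \<in> G \<and> (\<forall>c'\<in>G. key c' \<le> key c)" using c by blast
  then show ?thesis unfolding pick_def by (rule someI_ex)
qed

lemma zs_step:
  assumes "finite E" "elig E R (set (zs key R E j)) \<noteq> {}"
  shows "zs key R E (Suc j) = zs key R E j @ [pick key (elig E R (set (zs key R E j)))]"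
    "pick key (elig E R (set (zs key R E j))) \<in> elig E R (set (zs key R E j))"
    "\<forall>c'\<in>elig E R (set (zs key R E j)). key c' \<le> key (pick key (elig E R (set (zs key R E j))))"
proof -
  have f: "finite (elig E R (set (zs key R E j)))" using assms(1) unfolding elig_def by simp
  show "zs key R E (Suc j) = zs key R E j @ [pick key (elig E R (set (zs key R E j)))]"
    using assms by simp
  show "pick key (elig E R (set (zs key R E j))) \<in> elig E R (set (zs key R E j))"
    "\<forall>c'\<in>elig E R (set (zs key R E j)). key c' \<le> key (pick key (elig E R (set (zs key R E j))))"
    using pick_prop[OF f assms(2)] by auto
qed

lemma zs_sub: assumes "finite E" shows "set (zs key R E j) \<subseteq> E"
proof (induction j)
  case 0 then show ?case by simp
next
  case (Suc j)
  show ?case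
  proof (cases "elig E R (set (zs key R E j)) = {}")
    case True then show ?thesis using Suc by simp
  next
    case False
    show ?thesis using zs_step[OF assms False] Suc unfolding elig_def by auto
  qed
qed

lemma zs_len: "length (zs key R E j) \<le> j"
  by (induction j) auto

lemma zs_prefix: "j \<le> j' \<Longrightarrow> set (zs key R E j) \<subseteq> set (zs key R E j')"
proof (induction j' rule: dec_induct)
  case base then show ?case by simp
next
  case (step n) then show ?case by auto
qed

lemma zs_pairwise:
  assumes "finite E" "\<And>a b. a \<in> E \<Longrightarrow> b \<in> E \<Longrightarrow> R a b \<Longrightarrow> R b a"
  shows "z \<in> set (zs key R E j) \<Longrightarrow> z' \<in> set (zs key R E j) \<Longrightarrow> R z z' \<Longrightarrow> z = z'"
proof (induction j arbitrary: z z')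
  case 0 then show ?case by simp
next
  case (Suc j)
  show ?case
  proof (cases "elig E R (set (zs key R E j)) = {}")
    case True then show ?thesis using Suc by simp
  next
    case False
    note st = zs_step[OF assms(1) False]
    let ?p = "pick key (elig E R (set (zs key R E j)))"
    have np: "\<forall>z\<in>set (zs key R E j). \<not> R z ?p" using st(2) unfolding elig_def by auto
    have pE: "?p \<in> E" using st(2) unfolding elig_def by auto
    have sub: "set (zs key R E j) \<subseteq> E" using zs_sub[OF assms(1)] .
    have nq: "\<forall>z\<in>set (zs key R E j). \<not> R ?p z" using np pE sub assms(2) by blast
    show ?thesis using Suc.prems Suc.IH st(1) np nq by auto
  qed
qed

lemma zs_distinct:
  assumes "finite E" "\<And>a. a \<in> E \<Longrightarrow> R a a"
  shows "distinct (zs key R E j)"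
proof (induction j)
  case 0 then show ?case by simp
next
  case (Suc j)
  show ?case
  proof (cases "elig E R (set (zs key R E j)) = {}")
    case True then show ?thesis using Suc by simp
  next
    case False
    note st = zs_step[OF assms(1) False]
    let ?p = "pick key (elig E R (set (zs key R E j)))"
    have np: "\<forall>z\<in>set (zs key R E j). \<not> R z ?p" using st(2) unfolding elig_def by auto
    have pE: "?p \<in> E" using st(2) unfolding elig_def by auto
    have "?p \<notin> set (zs key R E j)" using np assms(2)[OF pE] by auto
    then show ?thesis using Suc st(1) by simp
  qed
qed

lemma zs_full:
  assumes "finite E" "w \<in> E" "\<forall>z\<in>set (zs key R E j). \<not> R z w"
  shows "length (zs key R E j) = j \<and> (\<forall>z\<in>set (zs key R E j). key w \<le> key z)"
  using assms(3)
proof (induction j)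
  case 0 then show ?case by simp
next
  case (Suc j)
  have h: "\<forall>z\<in>set (zs key R E j). \<not> R z w" using Suc.prems zs_prefix[of j "Suc j" key R E] by auto
  note IH = Suc.IH[OF h]
  have wel: "w \<in> elig E R (set (zs key R E j))" using h assms(2) unfolding elig_def by auto
  then have ne: "elig E R (set (zs key R E j)) \<noteq> {}" by auto
  note st = zs_step[OF assms(1) ne]
  show ?case using IH st(1) st(3) wel by auto
qed

locale snfloc =
  fixes psi0 :: fm and psis :: "fm list" and K k :: nat and A :: "'a struct" and C :: "'a set"
  assumes qf0: "qfree psi0" and qfs: "\<forall>psi\<in>set psis. qfree psi" and M1: "length psis \<ge> 1"
    and eqs: "fm_eqs (snf psi0 psis) = {1..K}"
    and wf: "wf_struct A" and fin: "finite (sdom A)" and mods: "models A (snf psi0 psis)"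
    and kK: "k \<le> K" and CC: "C \<in> classes A K (k + 1)"
begin

abbreviation "U \<equiv> sdom A"
abbreviation "M \<equiv> length psis"
abbreviation "ph \<equiv> snf psi0 psis"
abbreviation "lt \<equiv> slt A"
abbreviation "Ek \<equiv> Erel A K k"

lemma lt_irrefl: "a \<in> U \<Longrightarrow> \<not> lt a a" using wfD(2)[OF wf] by blast
lemma lt_trans: "a \<in> U \<Longrightarrow> b \<in> U \<Longrightarrow> c \<in> U \<Longrightarrow> lt a b \<Longrightarrow> lt b c \<Longrightarrow> lt a c" using wfD(3)[OF wf] by blast
lemma lt_total: "a \<in> U \<Longrightarrow> b \<in> U \<Longrightarrow> a \<noteq> b \<Longrightarrow> lt a b \<or> lt b a" using wfD(4)[OF wf] by blast
lemma lt_asym: "a \<in> U \<Longrightarrow> b \<in> U \<Longrightarrow> lt a b \<Longrightarrow> \<not> lt b a" using lt_irrefl lt_trans by blast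

lemma Ek_refl: "a \<in> U \<Longrightarrow> Ek a a" using Erel_refl[OF wf] .
lemma Ek_sym: "a \<in> U \<Longrightarrow> b \<in> U \<Longrightarrow> Ek a b \<Longrightarrow> Ek b a" using Erel_sym[OF wf] .
lemma Ek_trans: "a \<in> U \<Longrightarrow> b \<in> U \<Longrightarrow> c \<in> U \<Longrightarrow> Ek a b \<Longrightarrow> Ek b c \<Longrightarrow> Ek a c" using Erel_trans[OF wf] .

lemma C_def': "\<exists>a0\<in>U. C = {b \<in> U. Erel A K (Suc k) a0 b}"
  using CC unfolding classes_def by auto

definition a0 where "a0 = (SOME a0. a0 \<in> U \<and> C = {b \<in> U. Erel A K (Suc k) a0 b})"
lemma a0: "a0 \<in> U" "C = {b \<in> U. Erel A K (Suc k) a0 b}"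
  using someI_ex[OF C_def'[unfolded Bex_def]] unfolding a0_def by auto

lemma C_sub: "C \<subseteq> U" using a0 by auto
lemma a0C: "a0 \<in> C" using a0 Erel_refl[OF wf] by auto
lemma finC: "finite C" using C_sub fin finite_subset by blast

lemma C_rel: "c \<in> C \<Longrightarrow> c' \<in> C \<Longrightarrow> Erel A K (Suc k) c c'"
proof -
  assume c: "c \<in> C" and c': "c' \<in> C"
  have 1: "Erel A K (Suc k) a0 c" "Erel A K (Suc k) a0 c'" "c \<in> U" "c' \<in> U" using c c' a0 by auto
  have "Erel A K (Suc k) c a0" using Erel_sym[OF wf a0(1) 1(3) 1(1)] .
  then show "Erel A K (Suc k) c c'" using Erel_trans[OF wf 1(3) a0(1) 1(4)] 1(2) by blast
qed
lemma C_closed: "x \<in> U \<Longrightarrow> c \<in> C \<Longrightarrow> Erel A K (Suc k) x c \<Longrightarrow> x \<in> C"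
proof -
  assume x: "x \<in> U" and c: "c \<in> C" and r: "Erel A K (Suc k) x c"
  have "Erel A K (Suc k) a0 c" using c a0 by auto
  then have "Erel A K (Suc k) a0 x" using Erel_sym[OF wf _ _ r] Erel_trans[OF wf] a0(1) x c C_sub by blast
  then show "x \<in> C" using a0 x by auto
qed
lemma Ek_C: "x \<in> U \<Longrightarrow> c \<in> C \<Longrightarrow> Ek x c \<Longrightarrow> x \<in> C"
proof -
  assume x: "x \<in> U" and c: "c \<in> C" and e: "Ek x c"
  have "c \<in> U" using c C_sub by auto
  then have "Erel A K (Suc k) x c" using Erel_mono[OF wf kK x _ e] by simp
  then show "x \<in> C" using C_closed x c by blast
qed

definition blk where "blk x = {b \<in> U. Ek x b}"
lemma blk_self: "x \<in> U \<Longrightarrow> x \<in> blk x" unfolding blk_def using Ek_refl by auto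
lemma blk_C: "x \<in> C \<Longrightarrow> blk x \<subseteq> C"
proof
  fix b assume x: "x \<in> C" and "b \<in> blk x"
  then have b: "b \<in> U" "Ek x b" unfolding blk_def by auto
  have "x \<in> U" using x C_sub by auto
  then have "Ek b x" using Ek_sym b by blast
  then show "b \<in> C" using Ek_C b x by blast
qed
lemma blk_class: "x \<in> U \<Longrightarrow> blk x \<in> classes A K k" unfolding blk_def classes_def by auto

lemma uniform:
  assumes x: "x \<in> U" and y: "y \<in> C" and w: "w \<in> C" and ny: "\<not> Ek x y" and nw: "\<not> Ek x w"
    and i: "1 \<le> i" "i \<le> K"
  shows "seq A i x y \<longleftrightarrow> seq A i x w"
proof (cases "Suc k \<le> i")
  case True
  then have kK': "Suc k \<le> K" using i by simp
  have "Erel A K (Suc k) y w" using C_rel y w by blast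
  then have "seq A (Suc k) y w" using kK' unfolding Erel_def by simp
  moreover have "y \<in> U" "w \<in> U" using y w C_sub by auto
  ultimately have yw: "seq A i y w" using seq_mono[OF wf _ True, of y w] by simp
  show ?thesis using yw seq_sym[OF wf i(1)] seq_trans[OF wf i(1)] x y w C_sub by blast
next
  case False
  then have k0: "k \<noteq> 0" "i \<le> k" using i by auto
  have ek: "Ek a b = seq A k a b" for a b using k0 kK unfolding Erel_def by simp
  have "\<not> seq A i x y" using ny ek seq_mono[OF wf i(1) k0(2)] x y C_sub by blast
  moreover have "\<not> seq A i x w" using nw ek seq_mono[OF wf i(1) k0(2)] x w C_sub by blast
  ultimately show ?thesis by simp
qed

definition rk where "rk a = card {b \<in> U. lt b a}"
definition rrk where "rrk a = card {b \<in> U. lt a b}"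

lemma rk_lt: assumes "a \<in> U" "b \<in> U" "lt a b" shows "rk a < rk b"
proof -
  have "{c \<in> U. lt c a} \<subset> {c \<in> U. lt c b}" using assms lt_trans lt_irrefl by blast
  then show ?thesis unfolding rk_def using fin by (simp add: psubset_card_mono)
qed
lemma rrk_lt: assumes "a \<in> U" "b \<in> U" "lt a b" shows "rrk b < rrk a"
proof -
  have "{c \<in> U. lt b c} \<subset> {c \<in> U. lt a c}" using assms lt_trans lt_irrefl by blast
  then show ?thesis unfolding rrk_def using fin by (simp add: psubset_card_mono)
qed
lemma rk_less: assumes "a \<in> U" "b \<in> U" "rk a < rk b" shows "lt a b"
proof (rule ccontr)
  assume "\<not> lt a b"
  moreover have "a \<noteq> b" using assms by auto
  ultimately have "lt b a" using lt_total assms by blast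
  then show False using rk_lt assms by fastforce
qed
lemma rrk_less: assumes "a \<in> U" "b \<in> U" "rrk a < rrk b" shows "lt b a"
proof (rule ccontr)
  assume "\<not> lt b a"
  moreover have "a \<noteq> b" using assms by auto
  ultimately have "lt a b" using lt_total assms by blast
  then show False using rrk_lt assms by fastforce
qed

end

lemma finite_atom_sets: "finite (atom_eqs a)" "finite (atom_uns a)" "finite (atom_bins a)"
  by (cases a; simp)+

lemma finite_x_atoms: "finite (x_atoms f)"
proof -
  have "finite (fm_eqs f)" "finite (fm_uns f)" "finite (fm_bins f)"
    unfolding fm_eqs_def fm_uns_def fm_bins_def using finite_fm_atoms finite_atom_sets by auto
  then show ?thesis unfolding x_atoms_def by auto
qed

lemma finite_x_literals: "finite (x_literals f)"
proof -
  have "x_literals f \<subseteq> UNIV \<times> x_atoms f" unfolding x_literals_def by auto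
  moreover have "finite (UNIV \<times> x_atoms f :: literal set)" using finite_x_atoms by auto
  ultimately show ?thesis using finite_subset by blast
qed

lemma finite_one_types: "finite (one_types f)"
proof -
  have "one_types f \<subseteq> Pow (x_literals f)" unfolding one_types_def by auto
  then show ?thesis using finite_x_literals finite_subset by blast
qed

context snfloc begin

definition ty where "ty a = {(sat_atom A (\<lambda>_. a) at, at) | at. at \<in> x_atoms ph}"

lemma ty_eq: assumes "ty a = ty b" "at \<in> x_atoms ph"
  shows "sat_atom A (\<lambda>_. a) at = sat_atom A (\<lambda>_. b) at"
proof -
  have "(sat_atom A (\<lambda>_. a) at, at) \<in> ty b" using assms unfolding ty_def by blast
  then show ?thesis unfolding ty_def by auto
qed

lemma ty_sun: "ty a = ty b \<Longrightarrow> i \<in> fm_uns ph \<Longrightarrow> sun A i a = sun A i b"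
  using ty_eq[of a b "AU i X"] unfolding x_atoms_def by auto
lemma ty_sbin: "ty a = ty b \<Longrightarrow> i \<in> fm_bins ph \<Longrightarrow> sbin A i a a = sbin A i b b"
  using ty_eq[of a b "AR i X X"] unfolding x_atoms_def by auto

lemma ty_one: assumes a: "a \<in> U" shows "ty a \<in> one_types ph"
proof -
  have sub: "ty a \<subseteq> x_literals ph" unfolding ty_def x_literals_def by auto
  define S0 :: "nat struct" where "S0 = \<lparr>sdom = {0}, slt = (\<lambda>_ _. False), seq = (\<lambda>_ _ _. True),
     sun = (\<lambda>i _. sun A i a), sbin = (\<lambda>i _ _. sbin A i a a)\<rparr>"
  have wf0: "wf_struct S0" unfolding S0_def wf_struct_def equiv_on_def by simp
  have "lit_sat S0 (\<lambda>_. 0) l" if l: "l \<in> ty a" for l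
  proof -
    obtain at where at: "at \<in> x_atoms ph" "l = (sat_atom A (\<lambda>_. a) at, at)" using l unfolding ty_def by auto
    have "sat_atom S0 (\<lambda>_. 0) at = sat_atom A (\<lambda>_. a) at"
    proof -
      consider "at = AEq X X" | "at = ALess X X" | i where "at = AE i X X" "i \<in> fm_eqs ph"
        | i where "at = AU i X" | i where "at = AR i X X"
        using at(1) unfolding x_atoms_def by auto
      then show ?thesis
      proof cases
        case 2 then show ?thesis using lt_irrefl a unfolding S0_def by simp
      next
        case (3 i) then show ?thesis using seq_refl[OF wf _ a, of i] eqs unfolding S0_def by simp
      qed (auto simp: S0_def)
    qed
    then show ?thesis using at by simp
  qed
  then have cons: "consistent_lits (ty a)" unfolding consistent_lits_def using wf0
    by (intro exI[of _ S0] exI[of _ 0]) (simp add: S0_def)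
  have max: "\<not> consistent_lits L'" if ps: "ty a \<subset> L'" and ps2: "L' \<subseteq> x_literals ph" for L'
  proof
    assume c: "consistent_lits L'"
    obtain l where l: "l \<in> L'" "l \<notin> ty a" using ps by blast
    obtain b at where "l = (b, at)" by (cases l)
    then have bat: "(b, at) \<in> L'" "(b, at) \<notin> ty a" using l by auto
    have atx: "at \<in> x_atoms ph" using bat(1) ps2 unfolding x_literals_def by auto
    have in1: "(sat_atom A (\<lambda>_. a) at, at) \<in> L'" using ps atx unfolding ty_def by blast
    have ne: "b \<noteq> sat_atom A (\<lambda>_. a) at" using bat(2) atx unfolding ty_def by blast
    obtain S :: "nat struct" and c0 where "\<forall>l\<in>L'. lit_sat S (\<lambda>_. c0) l"
      using c unfolding consistent_lits_def by blast
    then have "lit_sat S (\<lambda>_. c0) (b, at)" "lit_sat S (\<lambda>_. c0) (sat_atom A (\<lambda>_. a) at, at)"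
      using bat(1) in1 by auto
    then show False using ne by simp
  qed
  show ?thesis unfolding one_types_def using sub cons max by blast
qed

end

lemma card_filter_sum: "finite Xs \<Longrightarrow> card {d\<in>Xs. P d} = (\<Sum>d\<in>Xs. if P d then 1 else 0 :: nat)"
  by (simp add: sum.If_cases Int_def conj_commute)

lemma double_count:
  assumes "finite Ys" "finite Xs" "\<And>d. d \<in> Xs \<Longrightarrow> card {x\<in>Ys. x \<in> Wf d} \<le> m"
  shows "(\<Sum>x\<in>Ys. card {d\<in>Xs. x \<in> Wf d}) \<le> card Xs * m"
proof -
  have "(\<Sum>x\<in>Ys. card {d\<in>Xs. x \<in> Wf d}) = (\<Sum>x\<in>Ys. \<Sum>d\<in>Xs. if x \<in> Wf d then 1 else 0 :: nat)"
    using assms(2) card_filter_sum by (intro sum.cong) auto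
  also have "\<dots> = (\<Sum>d\<in>Xs. \<Sum>x\<in>Ys. if x \<in> Wf d then 1 else 0 :: nat)" by (rule sum.swap)
  also have "\<dots> = (\<Sum>d\<in>Xs. card {x\<in>Ys. x \<in> Wf d})"
    using assms(1) card_filter_sum[symmetric] by (intro sum.cong) auto
  also have "\<dots> \<le> (\<Sum>d\<in>Xs. m)" using assms(3) by (intro sum_mono) auto
  also have "\<dots> = card Xs * m" by simp
  finally show ?thesis .
qed

lemma blocked_count:
  assumes "finite Ys" "finite Xs" "\<And>d. d \<in> Xs \<Longrightarrow> card (Wf d) \<le> m" "1 \<le> m" "\<And>d. finite (Wf d)"
  shows "card {x\<in>Ys. m \<le> card {d\<in>Xs. x \<in> Wf d}} \<le> card Xs"
proof -
  let ?B = "{x\<in>Ys. m \<le> card {d\<in>Xs. x \<in> Wf d}}"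
  have fB: "finite ?B" using assms(1) by simp
  have "card {x\<in>?B. x \<in> Wf d} \<le> m" if "d \<in> Xs" for d
  proof -
    have "card {x\<in>?B. x \<in> Wf d} \<le> card (Wf d)" using assms(5) by (intro card_mono) auto
    then show ?thesis using assms(3)[OF that] by simp
  qed
  then have "(\<Sum>x\<in>?B. card {d\<in>Xs. x \<in> Wf d}) \<le> card Xs * m" using double_count[OF fB assms(2)] by blast
  moreover have "card ?B * m \<le> (\<Sum>x\<in>?B. card {d\<in>Xs. x \<in> Wf d})"
    using sum_mono[of ?B "\<lambda>_. m" "\<lambda>x. card {d\<in>Xs. x \<in> Wf d}"] by simp
  ultimately have "card ?B * m \<le> card Xs * m" by linarith
  then show ?thesis using assms(4) by simp
qed

context snfloc begin

lemma U_ne: "U \<noteq> {}" using wfD(1)[OF wf] .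

lemma models_A: "\<forall>a\<in>U. \<forall>b\<in>U. sat A (vv a b) psi0" "\<forall>psi\<in>set psis. \<forall>a\<in>U. \<exists>b\<in>U. sat A (vv a b) psi"
  using mods models_snf_iff[OF U_ne] by auto

definition wit where "wit x m = (SOME b. b \<in> U \<and> sat A (vv x b) (psis!m))"

lemma wit: assumes "x \<in> U" "m < M" shows "wit x m \<in> U" "sat A (vv x (wit x m)) (psis!m)"
proof -
  have "\<exists>b. b \<in> U \<and> sat A (vv x b) (psis!m)" using models_A(2) assms nth_mem[OF assms(2)] by blast
  then have "wit x m \<in> U \<and> sat A (vv x (wit x m)) (psis!m)" unfolding wit_def by (rule someI_ex)
  then show "wit x m \<in> U" "sat A (vv x (wit x m)) (psis!m)" by auto
qed

definition W where "W x = wit x ` {..<M}"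
definition Et where "Et t = {c \<in> C. ty c = t}"
definition candR where "candR t = set (zs rk Ek (Et t) (2*M))"
definition candL where "candL t = set (zs rrk Ek (Et t) (2*M))"
definition Ty where "Ty = ty ` C"
definition Cand where "Cand = (\<Union>t\<in>Ty. candR t \<union> candL t)"
definition BlR where "BlR t = {x\<in>U. M \<le> card {d\<in>candR t. x \<in> W d}}"
definition BlL where "BlL t = {x\<in>U. M \<le> card {d\<in>candL t. x \<in> W d}}"
definition Bl where "Bl = (\<Union>t\<in>Ty. BlR t \<union> BlL t)"
definition Sel where "Sel = Cand \<union> (\<Union>d\<in>Cand. W d \<inter> C) \<union> (\<Union>x\<in>Bl. W x \<inter> C)"
definition D where "D = (\<Union>x\<in>Sel. blk x)"
definition Bd where "Bd = (U - C) \<union> D"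

lemma card_W: "card (W x) \<le> M" unfolding W_def using card_image_le[of "{..<M}" "wit x"] by simp
lemma finite_W: "finite (W x)" unfolding W_def by simp
lemma finEt: "finite (Et t)" unfolding Et_def using finC by simp
lemma Et_sub: "Et t \<subseteq> C" unfolding Et_def by auto

lemma card_candR: "card (candR t) \<le> 2*M" unfolding candR_def
  using card_length[of "zs rk Ek (Et t) (2*M)"] zs_len[of rk Ek "Et t" "2*M"] by linarith
lemma card_candL: "card (candL t) \<le> 2*M" unfolding candL_def
  using card_length[of "zs rrk Ek (Et t) (2*M)"] zs_len[of rrk Ek "Et t" "2*M"] by linarith
lemma candR_sub: "candR t \<subseteq> Et t" unfolding candR_def using zs_sub[OF finEt] .
lemma candL_sub: "candL t \<subseteq> Et t" unfolding candL_def using zs_sub[OF finEt] .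
lemma fin_candR: "finite (candR t)" unfolding candR_def by simp
lemma fin_candL: "finite (candL t)" unfolding candL_def by simp
lemma finTy: "finite Ty" unfolding Ty_def using finC by simp
lemma Cand_sub: "Cand \<subseteq> C" unfolding Cand_def using candR_sub candL_sub Et_sub by blast
lemma finCand: "finite Cand" unfolding Cand_def using finTy fin_candR fin_candL by simp

lemma card_Cand: "card Cand \<le> card Ty * (4*M)"
proof -
  have "card Cand \<le> (\<Sum>t\<in>Ty. card (candR t \<union> candL t))" unfolding Cand_def by (rule card_UN_le[OF finTy])
  also have "\<dots> \<le> (\<Sum>t\<in>Ty. 4*M)"
  proof (intro sum_mono)
    fix t show "card (candR t \<union> candL t) \<le> 4*M"
      using card_Un_le[of "candR t" "candL t"] card_candR[of t] card_candL[of t] by linarith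
  qed
  finally show ?thesis by simp
qed

lemma card_BlR: "card (BlR t) \<le> 2*M"
proof -
  have "card (BlR t) \<le> card (candR t)" unfolding BlR_def
    using blocked_count[OF fin fin_candR card_W M1 finite_W] by simp
  then show ?thesis using card_candR[of t] by linarith
qed
lemma card_BlL: "card (BlL t) \<le> 2*M"
proof -
  have "card (BlL t) \<le> card (candL t)" unfolding BlL_def
    using blocked_count[OF fin fin_candL card_W M1 finite_W] by simp
  then show ?thesis using card_candL[of t] by linarith
qed

lemma finBl: "finite Bl" unfolding Bl_def BlR_def BlL_def using fin finTy by simp

lemma card_Bl: "card Bl \<le> card Ty * (4*M)"
proof -
  have "card Bl \<le> (\<Sum>t\<in>Ty. card (BlR t \<union> BlL t))" unfolding Bl_def by (rule card_UN_le[OF finTy])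
  also have "\<dots> \<le> (\<Sum>t\<in>Ty. 4*M)"
  proof (intro sum_mono)
    fix t show "card (BlR t \<union> BlL t) \<le> 4*M"
      using card_Un_le[of "BlR t" "BlL t"] card_BlR[of t] card_BlL[of t] by linarith
  qed
  finally show ?thesis by simp
qed

lemma card_UW: assumes "finite Xs" shows "card (\<Union>x\<in>Xs. W x \<inter> C) \<le> card Xs * M"
proof -
  have "card (\<Union>x\<in>Xs. W x \<inter> C) \<le> (\<Sum>x\<in>Xs. card (W x \<inter> C))" by (rule card_UN_le[OF assms])
  also have "\<dots> \<le> (\<Sum>x\<in>Xs. M)"
    using card_W finite_W by (intro sum_mono) (meson card_mono inf_le1 le_trans)
  finally show ?thesis by simp
qed

lemma finSel: "finite Sel" unfolding Sel_def using finCand finBl finite_W by simp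

lemma Ty_card: "card Ty \<le> card (one_types ph)"
proof -
  have "Ty \<subseteq> one_types ph" unfolding Ty_def using ty_one C_sub by blast
  then show ?thesis using finite_one_types card_mono by blast
qed

lemma card_Sel: "card Sel \<le> 12 * M ^ 3 * card (one_types ph)"
proof -
  let ?T = "card Ty"
  have "card Sel \<le> card Cand + card (\<Union>d\<in>Cand. W d \<inter> C) + card (\<Union>x\<in>Bl. W x \<inter> C)"
    unfolding Sel_def by (meson card_Un_le add_le_mono le_trans order_refl)
  also have "\<dots> \<le> card Cand + card Cand * M + card Bl * M"
    using card_UW[OF finCand] card_UW[OF finBl] by linarith
  also have "\<dots> \<le> ?T * (4*M) + ?T * (4*M) * M + ?T * (4*M) * M"
    using card_Cand card_Bl by (intro add_mono mult_right_mono) auto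
  also have "\<dots> = ?T * (4*M + 8*M^2)" by (simp add: algebra_simps power2_eq_square)
  also have "\<dots> \<le> ?T * (12 * M^3)"
  proof -
    have "M^1 \<le> M^3" "M^2 \<le> M^3" using M1 by (intro power_increasing; simp)+
    then have "M \<le> M^3" "M^2 \<le> M^3" by simp_all
    then have "4*M + 8*M^2 \<le> 12 * M^3" by linarith
    then show ?thesis by simp
  qed
  also have "\<dots> \<le> card (one_types ph) * (12 * M^3)" using Ty_card by simp
  finally show ?thesis by (simp add: algebra_simps)
qed

end

context snfloc begin

lemma Sel_C: "Sel \<subseteq> C" unfolding Sel_def using Cand_sub by auto
lemma D_C: "D \<subseteq> C" unfolding D_def using Sel_C blk_C by blast
lemma Bd_U: "Bd \<subseteq> U" unfolding Bd_def using D_C C_sub by blast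
lemma Sel_D: "Sel \<subseteq> D" unfolding D_def using Sel_C C_sub blk_self by blast
lemma Cand_D: "Cand \<subseteq> D" using Sel_D unfolding Sel_def by blast
lemma Cand_Bd: "Cand \<subseteq> Bd" using Cand_D unfolding Bd_def by blast
lemma D_Bd: "D \<subseteq> Bd" unfolding Bd_def by blast
lemma blk_D: "z \<in> Sel \<Longrightarrow> blk z \<subseteq> D" unfolding D_def by blast

lemma wit_W: "x \<in> U \<Longrightarrow> m < M \<Longrightarrow> wit x m \<in> W x" unfolding W_def by auto

lemma wit_in_Bd:
  assumes "x \<in> U" "m < M" "W x \<inter> C \<subseteq> D" shows "wit x m \<in> Bd"
  using wit[OF assms(1,2)] wit_W[OF assms(1,2)] assms(3) unfolding Bd_def by blast

lemma Cand_W: "d \<in> Cand \<Longrightarrow> W d \<inter> C \<subseteq> D" using Sel_D unfolding Sel_def by blast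
lemma Bl_W: "x \<in> Bl \<Longrightarrow> W x \<inter> C \<subseteq> D" using Sel_D unfolding Sel_def by blast

definition NI where "NI x m \<longleftrightarrow> wit x m \<notin> Bd"
definition cs where "cs x m = (if lt x (wit x m) then candR (ty (wit x m)) else candL (ty (wit x m)))"
definition IdT where "IdT x = wit x ` {m'. m' < M \<and> \<not> NI x m'}"
definition Av where "Av x m = cs x m - {d. x \<in> W d} - blk x - IdT x"
definition grp where "grp x m = {m'. m' < M \<and> NI x m' \<and> ty (wit x m') = ty (wit x m) \<and> (lt x (wit x m') \<longleftrightarrow> lt x (wit x m))}"
definition g where "g x m = (SOME f. inj_on f (grp x m) \<and> f ` grp x m \<subseteq> Av x m) m"

lemma NI_basic:
  assumes x: "x \<in> Bd" and m: "m < M" and ni: "NI x m"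
  shows "wit x m \<in> C" "wit x m \<notin> D" "x \<notin> Cand" "x \<notin> Bl" "ty (wit x m) \<in> Ty" "\<not> Ek x (wit x m)"
    "x \<in> U" "wit x m \<noteq> x"
proof -
  have xU: "x \<in> U" using x Bd_U by blast
  then show "x \<in> U" .
  have wU: "wit x m \<in> U" using wit[OF xU m] by simp
  show wC: "wit x m \<in> C" using wU ni unfolding NI_def Bd_def by blast
  show wD: "wit x m \<notin> D" using ni unfolding NI_def Bd_def by blast
  show "x \<notin> Cand" using wit_in_Bd[OF xU m] Cand_W ni unfolding NI_def by blast
  show "x \<notin> Bl" using wit_in_Bd[OF xU m] Bl_W ni unfolding NI_def by blast
  show "ty (wit x m) \<in> Ty" using wC unfolding Ty_def by blast
  show "wit x m \<noteq> x" using x ni unfolding NI_def by force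
  show "\<not> Ek x (wit x m)"
  proof
    assume e: "Ek x (wit x m)"
    show False
    proof (cases "x \<in> D")
      case True
      then obtain z where z: "z \<in> Sel" "x \<in> blk z" unfolding D_def by blast
      have zU: "z \<in> U" using z(1) Sel_C C_sub by blast
      have "Ek z x" using z(2) unfolding blk_def by blast
      then have "Ek z (wit x m)" using Ek_trans[OF zU xU wU] e by blast
      then have "wit x m \<in> blk z" using wU unfolding blk_def by blast
      then show False using blk_D[OF z(1)] wD by blast
    next
      case False
      then have "x \<notin> C" using x unfolding Bd_def by blast
      then show False using Ek_C[OF xU wC e] by blast
    qed
  qed
qed

lemma Ek_Et: "a \<in> Et t \<Longrightarrow> Ek a a" using Ek_refl Et_sub C_sub by blast
lemma Ek_Et_sym: "a \<in> Et t \<Longrightarrow> b \<in> Et t \<Longrightarrow> Ek a b \<Longrightarrow> Ek b a" using Ek_sym Et_sub C_sub by blast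

lemma cand_pairwise: "z \<in> candR t \<Longrightarrow> z' \<in> candR t \<Longrightarrow> Ek z z' \<Longrightarrow> z = z'"
  "z \<in> candL t \<Longrightarrow> z' \<in> candL t \<Longrightarrow> Ek z z' \<Longrightarrow> z = z'"
proof -
  have sy: "\<And>a b. a \<in> Et t \<Longrightarrow> b \<in> Et t \<Longrightarrow> Ek a b \<Longrightarrow> Ek b a" using Ek_Et_sym by blast
  show "z \<in> candR t \<Longrightarrow> z' \<in> candR t \<Longrightarrow> Ek z z' \<Longrightarrow> z = z'"
    unfolding candR_def using zs_pairwise[where E="Et t" and R=Ek, OF finEt sy] by blast
  show "z \<in> candL t \<Longrightarrow> z' \<in> candL t \<Longrightarrow> Ek z z' \<Longrightarrow> z = z'"
    unfolding candL_def using zs_pairwise[where E="Et t" and R=Ek, OF finEt sy] by blast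
qed

lemma card_cand_eq:
  "card (candR t) = length (zs rk Ek (Et t) (2*M))" "card (candL t) = length (zs rrk Ek (Et t) (2*M))"
proof -
  have rf: "\<And>a. a \<in> Et t \<Longrightarrow> Ek a a" using Ek_Et by blast
  show "card (candR t) = length (zs rk Ek (Et t) (2*M))" unfolding candR_def
    using zs_distinct[where E="Et t" and R=Ek, OF finEt rf] distinct_card by blast
  show "card (candL t) = length (zs rrk Ek (Et t) (2*M))" unfolding candL_def
    using zs_distinct[where E="Et t" and R=Ek, OF finEt rf] distinct_card by blast
qed

lemma rk_inj: "a \<in> U \<Longrightarrow> b \<in> U \<Longrightarrow> rk a = rk b \<Longrightarrow> a = b" using rk_lt lt_total by fastforce
lemma rrk_inj: "a \<in> U \<Longrightarrow> b \<in> U \<Longrightarrow> rrk a = rrk b \<Longrightarrow> a = b" using rrk_lt lt_total by fastforce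

lemma cs_full:
  assumes x: "x \<in> Bd" and m: "m < M" and ni: "NI x m"
  shows "card (cs x m) = 2*M" "\<And>z. z \<in> cs x m \<Longrightarrow> (if lt x (wit x m) then lt (wit x m) z else lt z (wit x m))"
    "cs x m \<subseteq> Et (ty (wit x m))"
proof -
  note nb = NI_basic[OF assms]
  let ?w = "wit x m" let ?t = "ty (wit x m)"
  have wE: "?w \<in> Et ?t" using nb(1) unfolding Et_def by simp
  have wU: "?w \<in> U" using nb(1) C_sub by blast
  have nR: "\<forall>z\<in>candR ?t. \<not> Ek z ?w"
  proof (intro ballI notI)
    fix z assume z: "z \<in> candR ?t" "Ek z ?w"
    have "z \<in> Sel" using z(1) nb(5) unfolding Sel_def Cand_def by blast
    then show False using z(2) wU blk_D nb(2) unfolding blk_def by blast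
  qed
  have nL: "\<forall>z\<in>candL ?t. \<not> Ek z ?w"
  proof (intro ballI notI)
    fix z assume z: "z \<in> candL ?t" "Ek z ?w"
    have "z \<in> Sel" using z(1) nb(5) unfolding Sel_def Cand_def by blast
    then show False using z(2) wU blk_D nb(2) unfolding blk_def by blast
  qed
  have fR: "length (zs rk Ek (Et ?t) (2*M)) = 2*M \<and> (\<forall>z\<in>candR ?t. rk ?w \<le> rk z)"
    using zs_full[where R=Ek, OF finEt wE nR[unfolded candR_def]] unfolding candR_def by blast
  have fL: "length (zs rrk Ek (Et ?t) (2*M)) = 2*M \<and> (\<forall>z\<in>candL ?t. rrk ?w \<le> rrk z)"
    using zs_full[where R=Ek, OF finEt wE nL[unfolded candL_def]] unfolding candL_def by blast
  show "card (cs x m) = 2*M" unfolding cs_def using fR fL card_cand_eq by simp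
  show "cs x m \<subseteq> Et ?t" unfolding cs_def using candR_sub candL_sub by simp
  fix z assume z: "z \<in> cs x m"
  have zne: "z \<noteq> ?w" and zU: "z \<in> U"
  proof -
    have "z \<in> Cand" using z nb(5) unfolding cs_def Cand_def by (auto split: if_splits)
    then show "z \<noteq> ?w" "z \<in> U" using Cand_D nb(2) Cand_sub C_sub by blast+
  qed
  show "(if lt x ?w then lt ?w z else lt z ?w)"
  proof (cases "lt x ?w")
    case True
    then have "z \<in> candR ?t" using z unfolding cs_def by simp
    then have "rk ?w \<le> rk z" using fR by blast
    moreover have "rk ?w \<noteq> rk z" using rk_inj[OF wU zU] zne by metis
    ultimately have "rk ?w < rk z" by simp
    then show ?thesis using rk_less[OF wU zU] True by simp
  next
    case False
    then have "z \<in> candL ?t" using z unfolding cs_def by simp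
    then have "rrk ?w \<le> rrk z" using fL by blast
    moreover have "rrk ?w \<noteq> rrk z" using rrk_inj[OF wU zU] zne by metis
    ultimately have "rrk ?w < rrk z" by simp
    then show ?thesis using rrk_less[OF wU zU] False by simp
  qed
qed

end

context snfloc begin

lemma NI_split: "card {m'. m' < M \<and> NI x m'} + card {m'. m' < M \<and> \<not> NI x m'} = M"
proof -
  have "{m'. m' < M \<and> NI x m'} \<union> {m'. m' < M \<and> \<not> NI x m'} = {..<M}" by auto
  moreover have "card ({m'. m' < M \<and> NI x m'} \<union> {m'. m' < M \<and> \<not> NI x m'}) =
     card {m'. m' < M \<and> NI x m'} + card {m'. m' < M \<and> \<not> NI x m'}"
    by (rule card_Un_disjoint) auto
  ultimately show ?thesis by simp
qed

lemma fin_cs: "finite (cs x m)" unfolding cs_def using fin_candR fin_candL by simp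

lemma Av_card:
  assumes x: "x \<in> Bd" and m: "m < M" and ni: "NI x m"
  shows "card (grp x m) \<le> card (Av x m)"
proof -
  note nb = NI_basic[OF assms]
  let ?w = "wit x m" let ?t = "ty (wit x m)"
  let ?cs = "cs x m"
  let ?U1 = "{d \<in> ?cs. x \<in> W d}" let ?U2 = "?cs \<inter> blk x"
  have c1: "card ?U1 < M"
  proof -
    have "x \<notin> BlR ?t" "x \<notin> BlL ?t" using nb(4,5) unfolding Bl_def by blast+
    then show ?thesis using nb(7) unfolding BlR_def BlL_def cs_def by (auto split: if_splits)
  qed
  have c2: "card ?U2 \<le> 1"
  proof -
    have "\<forall>a1\<in>?U2. \<forall>a2\<in>?U2. a1 = a2"
    proof (intro ballI)
      fix a1 a2 assume a: "a1 \<in> ?U2" "a2 \<in> ?U2"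
      have aU: "a1 \<in> U" "a2 \<in> U" using a unfolding blk_def by auto
      have "Ek x a1" "Ek x a2" using a unfolding blk_def by auto
      then have "Ek a1 x" "Ek x a2" using Ek_sym[OF nb(7) aU(1)] by auto
      then have e: "Ek a1 a2" using Ek_trans[OF aU(1) nb(7) aU(2)] by blast
      show "a1 = a2"
      proof (cases "lt x ?w")
        case True then show ?thesis using a e cand_pairwise(1) unfolding cs_def by auto
      next
        case False then show ?thesis using a e cand_pairwise(2) unfolding cs_def by auto
      qed
    qed
    then show ?thesis using fin_cs by (simp add: card_le_Suc0_iff_eq)
  qed
  have c3: "card (IdT x) \<le> card {m'. m' < M \<and> \<not> NI x m'}" unfolding IdT_def by (rule card_image_le) simp
  have c4: "card (grp x m) \<le> card {m'. m' < M \<and> NI x m'}" unfolding grp_def by (rule card_mono) auto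
  have sub: "?cs \<subseteq> Av x m \<union> ?U1 \<union> ?U2 \<union> IdT x" unfolding Av_def by auto
  have fIdT: "finite (IdT x)" unfolding IdT_def by simp
  have fAv: "finite (Av x m)" unfolding Av_def using fin_cs by simp
  have "card ?cs \<le> card (Av x m \<union> ?U1 \<union> ?U2 \<union> IdT x)" using sub fin_cs fIdT fAv by (intro card_mono) auto
  also have "\<dots> \<le> card (Av x m) + card ?U1 + card ?U2 + card (IdT x)"
    by (meson card_Un_le add_le_mono le_trans order_refl)
  finally have "card ?cs \<le> card (Av x m) + card ?U1 + card ?U2 + card (IdT x)" .
  then show ?thesis using cs_full(1)[OF assms] c1 c2 c3 c4 NI_split[of x] by linarith
qed

lemma g_ex: assumes "x \<in> Bd" "m < M" "NI x m"
  shows "\<exists>f. inj_on f (grp x m) \<and> f ` grp x m \<subseteq> Av x m"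
proof -
  have "finite (grp x m)" unfolding grp_def by simp
  moreover have "finite (Av x m)" unfolding Av_def using fin_cs by simp
  ultimately show ?thesis using card_le_inj[OF _ _ Av_card[OF assms]] by blast
qed

lemma g_Av: assumes "x \<in> Bd" "m < M" "NI x m" shows "g x m \<in> Av x m"
proof -
  let ?f = "SOME f. inj_on f (grp x m) \<and> f ` grp x m \<subseteq> Av x m"
  have "inj_on ?f (grp x m) \<and> ?f ` grp x m \<subseteq> Av x m" using someI_ex[OF g_ex[OF assms]] .
  moreover have "m \<in> grp x m" using assms unfolding grp_def by simp
  ultimately show ?thesis unfolding g_def by blast
qed

lemma dem:
  assumes x: "x \<in> Bd" and m: "m < M" and ni: "NI x m"
  shows "g x m \<in> Cand" "g x m \<in> Bd" "g x m \<in> C" "ty (g x m) = ty (wit x m)"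
    "g x m \<noteq> x" "wit x m \<noteq> x" "lt x (g x m) \<longleftrightarrow> lt x (wit x m)" "lt (g x m) x \<longleftrightarrow> lt (wit x m) x"
    "g x m \<notin> IdT x" "x \<notin> W (g x m)" "\<not> Ek x (g x m)" "\<not> Ek x (wit x m)" "wit x m \<in> U"
proof -
  note nb = NI_basic[OF assms]
  let ?w = "wit x m" let ?y = "g x m"
  have yAv: "?y \<in> Av x m" using g_Av[OF assms] .
  have ycs: "?y \<in> cs x m" using yAv unfolding Av_def by blast
  show yCand: "?y \<in> Cand" using ycs nb(5) unfolding cs_def Cand_def by (auto split: if_splits)
  show "?y \<in> Bd" using yCand Cand_Bd by blast
  show yC: "?y \<in> C" using yCand Cand_sub by blast
  show "ty ?y = ty ?w" using ycs cs_full(3)[OF assms] unfolding Et_def by blast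
  show "?y \<notin> IdT x" "x \<notin> W ?y" using yAv unfolding Av_def by auto
  have nblk: "?y \<notin> blk x" using yAv unfolding Av_def by auto
  have yU: "?y \<in> U" using yC C_sub by blast
  show "\<not> Ek x ?y" using nblk yU unfolding blk_def by blast
  then show "?y \<noteq> x" using Ek_refl[OF nb(7)] by force
  show "?w \<noteq> x" by (rule nb(8))
  show "\<not> Ek x ?w" by (rule nb(6))
  have wU: "?w \<in> U" using nb(1) C_sub by blast
  then show "?w \<in> U" .
  have side: "if lt x ?w then lt ?w ?y else lt ?y ?w" using cs_full(2)[OF assms ycs] .
  have both: "(lt x ?y \<longleftrightarrow> lt x ?w) \<and> (lt ?y x \<longleftrightarrow> lt ?w x)"
  proof (cases "lt x ?w")
    case True
    then have "lt ?w ?y" using side by simp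
    then have "lt x ?y" using lt_trans[OF nb(7) wU yU] True by blast
    moreover have "\<not> lt ?y x" using lt_asym[OF nb(7) yU] \<open>lt x ?y\<close> by blast
    moreover have "\<not> lt ?w x" using lt_asym[OF nb(7) wU] True by blast
    ultimately show ?thesis using True by blast
  next
    case False
    then have "lt ?y ?w" using side by simp
    moreover have "lt ?w x" using False lt_total[OF nb(7) wU] nb(8) by metis
    ultimately have "lt ?y x" using lt_trans[OF yU wU nb(7)] by blast
    moreover have "\<not> lt x ?y" using lt_asym[OF yU nb(7)] \<open>lt ?y x\<close> by blast
    ultimately show ?thesis using False \<open>lt ?w x\<close> by blast
  qed
  then show "lt x ?y \<longleftrightarrow> lt x ?w" "lt ?y x \<longleftrightarrow> lt ?w x" by blast+
qed

lemma g_inj: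
  assumes x: "x \<in> Bd" and m: "m < M" and ni: "NI x m" and m': "m' < M" and ni': "NI x m'"
    and eq: "g x m = g x m'"
  shows "m = m'"
proof -
  have t: "ty (wit x m) = ty (wit x m')" using dem(4)[OF x m ni] dem(4)[OF x m' ni'] eq by simp
  have s: "lt x (wit x m) \<longleftrightarrow> lt x (wit x m')" using dem(7)[OF x m ni] dem(7)[OF x m' ni'] eq by simp
  have gg: "grp x m = grp x m'" unfolding grp_def using t s by simp
  have aa: "Av x m = Av x m'" unfolding Av_def cs_def using t s by simp
  let ?f = "SOME f. inj_on f (grp x m) \<and> f ` grp x m \<subseteq> Av x m"
  have "inj_on ?f (grp x m)" using someI_ex[OF g_ex[OF x m ni]] by blast
  moreover have "g x m = ?f m" unfolding g_def ..
  moreover have "g x m' = ?f m'" unfolding g_def gg aa ..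
  moreover have "m \<in> grp x m" "m' \<in> grp x m" using m ni m' ni' t s unfolding grp_def by auto
  ultimately show ?thesis using eq unfolding inj_on_def by simp
qed

end

context snfloc begin

definition good where "good x y p q \<longleftrightarrow> p \<in> U \<and> q \<in> U \<and> ty p = ty x \<and> ty q = ty y \<and> (p = q \<longleftrightarrow> x = y)
   \<and> (lt p q \<longleftrightarrow> lt x y) \<and> (lt q p \<longleftrightarrow> lt y x)
   \<and> (\<forall>i. 1 \<le> i \<and> i \<le> K \<longrightarrow> (seq A i p q \<longleftrightarrow> seq A i x y) \<and> (seq A i q p \<longleftrightarrow> seq A i y x))"

lemma good_swap: "good x y p q \<Longrightarrow> good y x q p" unfolding good_def by auto
lemma good_refl: "x \<in> U \<Longrightarrow> y \<in> U \<Longrightarrow> good x y x y" unfolding good_def by auto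

lemma demand_good:
  assumes x: "x \<in> Bd" and m: "m < M" and ni: "NI x m"
  shows "good x (g x m) x (wit x m)"
proof -
  note d = dem[OF assms]
  have xU: "x \<in> U" using x Bd_U by blast
  have wC: "wit x m \<in> C" using NI_basic(1)[OF assms] .
  have yU: "g x m \<in> U" using d(3) C_sub by blast
  have "seq A i x (g x m) \<longleftrightarrow> seq A i x (wit x m)" if "1 \<le> i" "i \<le> K" for i
    using uniform[OF xU d(3) wC d(11) d(12) that] .
  moreover have "seq A i (wit x m) x \<longleftrightarrow> seq A i (g x m) x" if "1 \<le> i" "i \<le> K" "seq A i x (g x m) \<longleftrightarrow> seq A i x (wit x m)" for i
    using seq_sym[OF wf that(1) xU yU] seq_sym[OF wf that(1) xU d(13)] seq_sym[OF wf that(1) yU xU]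
      seq_sym[OF wf that(1) d(13) xU] that(3) by blast
  ultimately show ?thesis unfolding good_def using xU d by auto
qed

end

context snfloc begin
definition Pat where "Pat x y = (if \<exists>m<M. NI x m \<and> g x m = y then (x, wit x (SOME m. m<M \<and> NI x m \<and> g x m = y))
   else if \<exists>m<M. NI y m \<and> g y m = x then (wit y (SOME m. m<M \<and> NI y m \<and> g y m = x), y) else (x, y))"

lemma Pat_id: assumes "\<not> (\<exists>m<M. NI x m \<and> g x m = y)" "\<not> (\<exists>m<M. NI y m \<and> g y m = x)"
  shows "Pat x y = (x, y)"
  unfolding Pat_def by (subst if_not_P[OF assms(1)], subst if_not_P[OF assms(2)], rule refl)

lemma no_mutual: assumes "x \<in> Bd" "y \<in> Bd" "m < M" "NI x m" "g x m = y" "m' < M" "NI y m'" shows False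
proof -
  have "y \<in> Cand" using dem(1)[OF assms(1,3,4)] assms(5) by simp
  then show False using NI_basic(3)[OF assms(2,6,7)] by blast
qed

lemma Pat_case1:
  assumes x: "x \<in> Bd" and y: "y \<in> Bd" and ex: "\<exists>m<M. NI x m \<and> g x m = y"
  shows "Pat x y = (x, wit x (SOME m. m<M \<and> NI x m \<and> g x m = y))"
    "Pat y x = (wit x (SOME m. m<M \<and> NI x m \<and> g x m = y), x)"
    "good x y (fst (Pat x y)) (snd (Pat x y))"
proof -
  show p1: "Pat x y = (x, wit x (SOME m. m<M \<and> NI x m \<and> g x m = y))" unfolding Pat_def using ex by simp
  have nex: "\<not> (\<exists>m<M. NI y m \<and> g y m = x)" using no_mutual[OF x y] ex by blast
  show "Pat y x = (wit x (SOME m. m<M \<and> NI x m \<and> g x m = y), x)" unfolding Pat_def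
    by (subst if_not_P[OF nex], subst if_P[OF ex], rule refl)
  let ?m = "SOME m. m<M \<and> NI x m \<and> g x m = y"
  have mm: "?m < M \<and> NI x ?m \<and> g x ?m = y" using someI_ex[OF ex] .
  have "good x (g x ?m) x (wit x ?m)" using demand_good[OF x] mm by blast
  then show "good x y (fst (Pat x y)) (snd (Pat x y))" using mm p1 by simp
qed

lemma Pat_swap: assumes x: "x \<in> Bd" and y: "y \<in> Bd" shows "Pat y x = prod.swap (Pat x y)"
proof (cases "\<exists>m<M. NI x m \<and> g x m = y")
  case True then show ?thesis using Pat_case1[OF x y] by simp
next
  case F1: False
  show ?thesis
  proof (cases "\<exists>m<M. NI y m \<and> g y m = x")
    case True then show ?thesis using Pat_case1[OF y x] by simp
  next
    case False then show ?thesis using Pat_id[OF F1 False] Pat_id[OF False F1] by simp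
  qed
qed

lemma Pat_good: assumes x: "x \<in> Bd" and y: "y \<in> Bd" shows "good x y (fst (Pat x y)) (snd (Pat x y))"
proof (cases "\<exists>m<M. NI x m \<and> g x m = y")
  case True then show ?thesis using Pat_case1[OF x y] by simp
next
  case F1: False
  show ?thesis
  proof (cases "\<exists>m<M. NI y m \<and> g y m = x")
    case True
    have "good y x (fst (Pat y x)) (snd (Pat y x))" using Pat_case1(3)[OF y x True] .
    then have "good x y (snd (Pat y x)) (fst (Pat y x))" by (rule good_swap)
    then show ?thesis using Pat_swap[OF x y] by (simp add: prod.swap_def)
  next
    case False
    then have "Pat x y = (x, y)" using Pat_id[OF F1] by simp
    then show ?thesis using good_refl x y Bd_U by auto
  qed
qed

lemma Pat_diag: assumes x: "x \<in> Bd" shows "Pat x x = (x, x)"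
proof -
  have "\<not> (\<exists>m<M. NI x m \<and> g x m = x)" using dem(5)[OF x] by blast
  then show ?thesis using Pat_id by blast
qed

lemma Pat_wit: assumes x: "x \<in> Bd" and m: "m < M"
  shows "\<exists>y\<in>Bd. sat A (vv (fst (Pat x y)) (snd (Pat x y))) (psis!m)"
proof (cases "NI x m")
  case True
  let ?y = "g x m"
  have ex: "\<exists>m'<M. NI x m' \<and> g x m' = ?y" using True m by blast
  let ?m = "SOME m'. m'<M \<and> NI x m' \<and> g x m' = ?y"
  have mm: "?m < M \<and> NI x ?m \<and> g x ?m = ?y" using someI_ex[OF ex] .
  then have "?m = m" using g_inj[OF x _ _ m True] by blast
  then have "Pat x ?y = (x, wit x m)" using Pat_case1(1)[OF x dem(2)[OF x m True] ex] by simp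
  moreover have "sat A (vv x (wit x m)) (psis!m)" using wit(2) x Bd_U m by blast
  ultimately show ?thesis using dem(2)[OF x m True] by (intro bexI[of _ ?y]) auto
next
  case False
  let ?y = "wit x m"
  have yB: "?y \<in> Bd" using False unfolding NI_def by simp
  have xU: "x \<in> U" using x Bd_U by blast
  have n1: "\<not> (\<exists>m'<M. NI x m' \<and> g x m' = ?y)"
  proof
    assume "\<exists>m'<M. NI x m' \<and> g x m' = ?y"
    then obtain m' where m': "m' < M" "NI x m'" "g x m' = ?y" by blast
    have "?y \<in> IdT x" unfolding IdT_def using m False by blast
    then show False using dem(9)[OF x m'(1,2)] m'(3) by simp
  qed
  have n2: "\<not> (\<exists>m'<M. NI ?y m' \<and> g ?y m' = x)"
  proof
    assume "\<exists>m'<M. NI ?y m' \<and> g ?y m' = x"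
    then obtain m' where m': "m' < M" "NI ?y m'" "g ?y m' = x" by blast
    have "?y \<in> W x" using wit_W[OF xU m] .
    then show False using dem(10)[OF yB m'(1,2)] m'(3) by simp
  qed
  have "Pat x ?y = (x, ?y)" using Pat_id[OF n1 n2] .
  moreover have "sat A (vv x ?y) (psis!m)" using wit(2) xU m by blast
  ultimately show ?thesis using yB by (intro bexI[of _ ?y]) auto
qed

end

context snfloc begin
definition Bst :: "'a struct" where
  "Bst = \<lparr>sdom = Bd, slt = slt A, seq = seq A, sun = sun A, sbin = (\<lambda>i a b. sbin A i (fst (Pat a b)) (snd (Pat a b)))\<rparr>"

lemma atom_transfer:
  assumes at: "at \<in> fm_atoms ph" and x: "x \<in> Bd" and y: "y \<in> Bd"
  shows "sat_atom Bst (vv x y) at = sat_atom A (vv (fst (Pat x y)) (snd (Pat x y))) at"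
proof -
  obtain p q where pq: "Pat x y = (p, q)" by (cases "Pat x y")
  have gd: "good x y p q" using Pat_good[OF x y] pq by simp
  have yx: "Pat y x = (q, p)" using Pat_swap[OF x y] pq by simp
  have xx: "Pat x x = (x, x)" "Pat y y = (y, y)" using Pat_diag x y by auto
  have xU: "x \<in> U" "y \<in> U" using x y Bd_U by auto
  have pU: "p \<in> U" "q \<in> U" using gd unfolding good_def by auto
  have tys: "ty p = ty x" "ty q = ty y" using gd unfolding good_def by auto
  have eqs': "atom_eqs at \<subseteq> {1..K}" "atom_uns at \<subseteq> fm_uns ph" "atom_bins at \<subseteq> fm_bins ph"
    using at eqs unfolding fm_eqs_def fm_uns_def fm_bins_def by auto
  show ?thesis
  proof (cases at)
    case (AEq u w) then show ?thesis using gd pq unfolding good_def by (cases u; cases w) (auto simp: vv_def Bst_def)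
  next
    case (ALess u w) then show ?thesis using gd pq lt_irrefl xU pU unfolding good_def
      by (cases u; cases w) (auto simp: vv_def Bst_def)
  next
    case (AE i u w)
    then have i: "1 \<le> i" "i \<le> K" using eqs' by auto
    then show ?thesis using AE gd pq seq_refl[OF wf i(1)] xU pU unfolding good_def
      by (cases u; cases w) (auto simp: vv_def Bst_def)
  next
    case (AU i u)
    then have i: "i \<in> fm_uns ph" using eqs' by auto
    then show ?thesis using AU pq ty_sun[OF tys(1) i] ty_sun[OF tys(2) i]
      by (cases u) (auto simp: vv_def Bst_def)
  next
    case (AR i u w)
    then have i: "i \<in> fm_bins ph" using eqs' by auto
    then show ?thesis using AR pq yx xx ty_sbin[OF tys(1) i] ty_sbin[OF tys(2) i]
      by (cases u; cases w) (auto simp: vv_def Bst_def)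
  qed
qed

lemma sat_transfer_B:
  assumes "qfree f" "fm_atoms f \<subseteq> fm_atoms ph" "x \<in> Bd" "y \<in> Bd"
  shows "sat Bst (vv x y) f = sat A (vv (fst (Pat x y)) (snd (Pat x y))) f"
proof (rule sat_transfer[OF assms(1)])
  fix at assume "at \<in> fm_atoms f"
  then have "at \<in> fm_atoms ph" using assms(2) by blast
  then show "sat_atom Bst (vv x y) at = sat_atom A (vv (fst (Pat x y)) (snd (Pat x y))) at"
    using atom_transfer[OF _ assms(3) assms(4)] by blast
qed

lemma Cand_ne: "Cand \<noteq> {}"
proof -
  obtain a where a: "a \<in> C" using a0C by blast
  let ?t = "ty a"
  have tT: "?t \<in> Ty" using a unfolding Ty_def by blast
  have aE: "a \<in> Et ?t" using a unfolding Et_def by simp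
  have "candR ?t \<noteq> {}"
  proof (cases "\<forall>z\<in>candR ?t. \<not> Ek z a")
    case True
    have "length (zs rk Ek (Et ?t) (2*M)) = 2*M"
      using zs_full[where R=Ek, OF finEt aE True[unfolded candR_def]] by blast
    then show ?thesis using M1 unfolding candR_def by auto
  next
    case False then show ?thesis by blast
  qed
  then show ?thesis using tT unfolding Cand_def by blast
qed

lemma Bd_ne: "Bd \<noteq> {}" using Cand_ne Cand_Bd by blast

lemma wf_B: "wf_struct Bst"
proof -
  have e: "equiv_on Bd (seq A i)" if "i \<ge> 1" for i
  proof -
    have "equiv_on U (seq A i)" using wfD(5)[OF wf that] .
    then show ?thesis using Bd_U unfolding equiv_on_def by (meson subsetD)
  qed
  have n: "\<forall>i\<ge>1. \<forall>a\<in>Bd. \<forall>b\<in>Bd. seq A i a b \<longrightarrow> seq A (Suc i) a b"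
  proof (intro allI impI ballI)
    fix i a b assume "1 \<le> i" "a \<in> Bd" "b \<in> Bd" "seq A i a b"
    then show "seq A (Suc i) a b" using wfD(6)[OF wf, of i a b] Bd_U by auto
  qed
  have o1: "\<forall>a\<in>Bd. \<not> lt a a" using lt_irrefl Bd_U by auto
  have o2: "\<forall>a\<in>Bd. \<forall>b\<in>Bd. \<forall>c\<in>Bd. lt a b \<longrightarrow> lt b c \<longrightarrow> lt a c"
  proof (intro allI impI ballI)
    fix a b c assume "a \<in> Bd" "b \<in> Bd" "c \<in> Bd" "lt a b" "lt b c"
    then show "lt a c" using lt_trans[of a b c] Bd_U by auto
  qed
  have o3: "\<forall>a\<in>Bd. \<forall>b\<in>Bd. a \<noteq> b \<longrightarrow> lt a b \<or> lt b a"
  proof (intro allI impI ballI)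
    fix a b assume "a \<in> Bd" "b \<in> Bd" "a \<noteq> b"
    then show "lt a b \<or> lt b a" using lt_total[of a b] Bd_U by auto
  qed
  have s: "sdom Bst = Bd" "slt Bst = lt" "seq Bst = seq A" unfolding Bst_def by simp_all
  show ?thesis unfolding wf_struct_def s using Bd_ne e n o1 o2 o3 by blast
qed

lemma models_B: "models Bst ph"
proof -
  have dB: "sdom Bst = Bd" unfolding Bst_def by simp
  have a0: "fm_atoms psi0 \<subseteq> fm_atoms ph" unfolding fm_atoms_snf by (rule Un_upper1)
  have P1: "\<forall>a\<in>sdom Bst. \<forall>b\<in>sdom Bst. sat Bst (vv a b) psi0"
  proof (intro ballI)
    fix a b assume ab: "a \<in> sdom Bst" "b \<in> sdom Bst"
    then have hyp: "a \<in> Bd" "b \<in> Bd" using dB by auto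
    have "good a b (fst (Pat a b)) (snd (Pat a b))" using Pat_good hyp .
    then have "fst (Pat a b) \<in> U" "snd (Pat a b) \<in> U" unfolding good_def by (simp_all only:)
    then have "sat A (vv (fst (Pat a b)) (snd (Pat a b))) psi0" using models_A(1) by blast
    then show "sat Bst (vv a b) psi0" using sat_transfer_B[OF qf0 a0 hyp] by simp
  qed
  have P2: "\<forall>psi\<in>set psis. \<forall>a\<in>sdom Bst. \<exists>b\<in>sdom Bst. sat Bst (vv a b) psi"
  proof (intro ballI)
    fix psi a assume hyp: "psi \<in> set psis" "a \<in> sdom Bst"
    then have aB: "a \<in> Bd" using dB by auto
    have "\<exists>m<M. psis ! m = psi" using hyp(1) unfolding in_set_conv_nth .
    then obtain m where m0: "m < M" "psis ! m = psi" by blast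
    then have m: "m < M" "psi = psis ! m" by simp_all
    have q: "qfree psi" using qfs hyp(1) by simp
    have "fm_atoms psi \<subseteq> (\<Union>psi\<in>set psis. fm_atoms psi)" using hyp(1) by (rule UN_upper)
    then have at: "fm_atoms psi \<subseteq> fm_atoms ph" unfolding fm_atoms_snf by (rule le_supI2)
    obtain b where b: "b \<in> Bd" "sat A (vv (fst (Pat a b)) (snd (Pat a b))) (psis!m)"
      using Pat_wit[OF aB m(1)] by blast
    have "sat Bst (vv a b) psi" using sat_transfer_B[OF q at aB b(1)] m(2) b(2) by simp
    then show "\<exists>b\<in>sdom Bst. sat Bst (vv a b) psi" using b(1) dB by blast
  qed
  have ne: "sdom Bst \<noteq> {}" using dB Bd_ne by simp
  show ?thesis unfolding models_snf_iff[OF ne, of psi0 psis] using P1 P2 by (rule conjI)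
qed

lemma main: "\<exists>Dd \<subseteq> C.
           (\<exists>F. F \<subseteq> classes A K k \<and> (\<forall>Z\<in>F. Z \<subseteq> C)
                \<and> card F \<le> 12 * M ^ 3 * card (one_types ph)
                \<and> Dd = \<Union>F)
         \<and> (\<exists>B :: 'a struct. wf_struct B \<and> sdom B = (U - C) \<union> Dd
                \<and> models B ph)"
proof (intro exI conjI)
  show "D \<subseteq> C" by (rule D_C)
  show "blk ` Sel \<subseteq> classes A K k" using blk_class Sel_C C_sub by blast
  show "\<forall>Z\<in>blk ` Sel. Z \<subseteq> C" using blk_C Sel_C by blast
  show "card (blk ` Sel) \<le> 12 * M ^ 3 * card (one_types ph)"
    using card_image_le[OF finSel, of blk] card_Sel by linarith
  show "D = \<Union>(blk ` Sel)" unfolding D_def ..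
  show "wf_struct Bst" by (rule wf_B)
  show "sdom Bst = (U - C) \<union> D" unfolding Bst_def Bd_def by simp
  show "models Bst ph" by (rule models_B)
qed

end

theorem lemma1:
  fixes psi0 :: fm and psis :: "fm list" and K k :: nat
    and A :: "'a struct" and C :: "'a set"
  assumes "qfree psi0" and "\<forall>psi\<in>set psis. qfree psi" and "length psis \<ge> 1"
    and "fm_eqs (snf psi0 psis) = {1..K}"
    and "wf_struct A" and "finite (sdom A)" and "models A (snf psi0 psis)"
    and "k \<le> K" and "C \<in> classes A K (k + 1)"
  shows "\<exists>D \<subseteq> C.
           (\<exists>F. F \<subseteq> classes A K k \<and> (\<forall>Z\<in>F. Z \<subseteq> C)
                \<and> card F \<le> 12 * (length psis) ^ 3 * card (one_types (snf psi0 psis))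
                \<and> D = \<Union>F)
         \<and> (\<exists>B :: 'a struct. wf_struct B \<and> sdom B = (sdom A - C) \<union> D
                \<and> models B (snf psi0 psis))"
proof -
  interpret snfloc psi0 psis K k A C using assms by unfold_locales
  show ?thesis using main .
qed

end
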